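(* Let $a,b,c,d\in\mathbb{R}^2$ be points such that the segments $ab$ and $cd$ cross at a point $x$. Suppose that $|ab|\ge 2$, $|cd|\ge 2$, $|ax|\le|xb|$, $|cx|\le |xd|$, and $\angle axc\le 1^\circ$. Then $\max\{|ab|,|cd|\}\ge \max\{|ac|,|bd|\}+0.5$.
   Context: $|uv|$ denotes the Euclidean distance between points $u,v$. *)

theory Defs
  imports "HOL-Analysis.Analysis"
begin

definition vangle :: "'a::real_inner \<Rightarrow> 'a \<Rightarrow> real" where
  "vangle u v = arccos ((u \<bullet> v) / (norm u * norm v))"

definition angle3 :: "'a::real_inner \<Rightarrow> 'a \<Rightarrow> 'a \<Rightarrow> real" where
  "angle3 a x c = vangle (a - x) (c - x)"

definition segments_cross_at :: "'a::euclidean_space \<Rightarrow> 'a \<Rightarrow> 'a \<Rightarrow> 'a \<Rightarrow> 'a \<Rightarrow> bool" where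
  "segments_cross_at a b c d x \<longleftrightarrow>
     x \<in> open_segment a b \<and> x \<in> open_segment c d \<and>
     closed_segment a b \<inter> closed_segment c d = {x}"

end

theory Submission
  imports Defs
begin

lemma r1: fixes q s k :: real assumes "s \<ge> 1" "q \<ge> s" "k \<ge> 9/10" "k \<le> 1"
 shows "q^2 + s^2 - 2 * k * q * s \<le> (q - 1/2) ^ 2"
proof -
  have "2*k * s \<ge> 2 * (9/10) * 1" using assms by (intro mult_mono) auto
  then have A: "(q-s)*(1-2*k * s) \<le> 0" using assms by (intro mult_nonneg_nonpos) auto
  have B: "s^2*(1-2*k) + s - 1/4 \<le> 0"
  proof -
    have "s^2*(1-2*k) \<le> s^2 * (-4/5)" using assms by (intro mult_left_mono) auto
    moreover have "s^2 * (4/5) - s + 1/4 \<ge> 0" proof -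
      have "(s-1)*(4 * s/5-1/5) \<ge> 0" using assms by (intro mult_nonneg_nonneg) auto
      moreover have "s^2*(4/5) - s + 1/4 = (s-1)*(4 * s/5-1/5) + 1/20" by (simp add: power2_eq_square field_simps)
      ultimately show ?thesis by linarith
    qed
    ultimately show ?thesis by linarith
  qed
  have "q^2 + s^2 - 2 * k * q * s - (q - 1/2) ^ 2 = s^2*(1-2*k) + s - 1/4 + (q-s)*(1-2*k * s)"
    by (simp add: power2_eq_square algebra_simps)
  with A B show ?thesis by linarith
qed

lemma r2: fixes q s k M :: real assumes "s \<ge> 1" "q \<ge> 1" "k \<ge> 9/10" "k \<le> 1" "q \<le> M" "s \<le> M"
  shows "q^2 + s^2 - 2 * k * q * s \<le> (M - 1/2) ^ 2"
proof -
  have "q^2 + s^2 - 2 * k * q * s \<le> (max q s - 1/2) ^ 2"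
  proof (cases "q \<ge> s")
    case True then show ?thesis using r1[of s q k] assms by (simp add: max_def)
  next
    case False then show ?thesis using r1[of q s k] assms by (simp add: max_def algebra_simps)
  qed
  also have "\<dots> \<le> (M - 1/2) ^ 2" using assms by (intro power_mono) auto
  finally show ?thesis .
qed

lemma r3: fixes P R k M :: real assumes "P \<ge> 0" "R \<ge> 0" "k \<ge> 1/2" "P \<le> M/2" "R \<le> M/2" "M \<ge> 2"
  shows "P^2 + R^2 - 2 * k * P * R \<le> (M - 1/2) ^ 2"
proof -
  have "P^2 + R^2 - 2 * k * P * R \<le> (max P R) ^ 2"
  proof (cases "P \<ge> R")
    case True
    have "1 * P \<le> (2*k)*P" using assms by (intro mult_right_mono) auto
    then have "2*k*P \<ge> R" using True by simp
    then have "R * (R - 2*k*P) \<le> 0" using assms by (intro mult_nonneg_nonpos) auto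
    then show ?thesis using True by (simp add: max_def power2_eq_square algebra_simps)
  next
    case False
    have "1 * R \<le> (2*k)*R" using assms by (intro mult_right_mono) auto
    then have "2*k*R \<ge> P" using False by simp
    then have "P * (P - 2*k*R) \<le> 0" using assms by (intro mult_nonneg_nonpos) auto
    then show ?thesis using False by (simp add: max_def power2_eq_square algebra_simps)
  qed
  also have "\<dots> \<le> (M - 1/2) ^ 2" using assms by (intro power_mono) (auto simp: max_def)
  finally show ?thesis .
qed

lemma cosb: "cos (pi/180) \<ge> 9/10"
proof -
  have "cos (pi/180) = 1 - 2 * sin (pi/360) ^ 2" using cos_double_sin[of "pi/360"] by simp
  moreover have "\<bar>sin (pi/360)\<bar> \<le> pi/360" using abs_sin_x_le_abs_x[of "pi/360"] by simp
  moreover have "pi/360 \<le> 1/10" using pi_less_4 by simp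
  ultimately have "sin (pi/360) ^ 2 \<le> (1/10)^2"
    by (metis abs_ge_zero order_trans power2_abs power_mono)
  with \<open>cos (pi/180) = _\<close> show ?thesis by (simp add: power2_eq_square)
qed

lemma nd: fixes u v :: "'a::real_inner" shows "norm (u - v) ^ 2 = norm u ^ 2 + norm v ^ 2 - 2 * (u \<bullet> v)"
  by (simp add: power2_norm_eq_inner inner_diff_left inner_diff_right inner_commute)

theorem lemma1:
  fixes a b c d x :: "real^2"
  assumes "segments_cross_at a b c d x"
    and "dist a b \<ge> 2" and "dist c d \<ge> 2"
    and "dist a x \<le> dist x b" and "dist c x \<le> dist x d"
    and "angle3 a x c \<le> pi / 180"
  shows "max (dist a b) (dist c d) \<ge> max (dist a c) (dist b d) + 1/2"
proof -
  from assms(1) have xab: "x \<in> open_segment a b" and xcd: "x \<in> open_segment c d"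
    unfolding segments_cross_at_def by auto
  from xab obtain t where t: "0 < t" "t < 1" "x = (1 - t) *\<^sub>R a + t *\<^sub>R b"
    unfolding in_segment by auto
  from xcd obtain s where s: "0 < s" "s < 1" "x = (1 - s) *\<^sub>R c + s *\<^sub>R d"
    unfolding in_segment by auto
  define W where "W = dist a b"
  define Z where "Z = dist c d"
  define M where "M = max W Z"
  have ax: "a - x = t *\<^sub>R (a - b)" using t by (simp add: algebra_simps)
  have bx: "b - x = (1 - t) *\<^sub>R (b - a)" using t by (simp add: algebra_simps)
  have cx: "c - x = s *\<^sub>R (c - d)" using s by (simp add: algebra_simps)
  have dx: "d - x = (1 - s) *\<^sub>R (d - c)" using s by (simp add: algebra_simps)
  have nax: "norm (a - x) = t * W" using ax t by (simp add: W_def dist_norm)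
  have nbx: "norm (b - x) = (1 - t) * W" using bx t by (simp add: W_def dist_norm norm_minus_commute)
  have ncx: "norm (c - x) = s * Z" using cx s by (simp add: Z_def dist_norm)
  have ndx: "norm (d - x) = (1 - s) * Z" using dx s by (simp add: Z_def dist_norm norm_minus_commute)
  have W2: "W \<ge> 2" and Z2: "Z \<ge> 2" using assms(2,3) by (auto simp: W_def Z_def)
  have "t * W \<le> (1 - t) * W" using assms(4) nax nbx by (simp add: dist_norm norm_minus_commute)
  then have t2: "t \<le> 1/2" using W2 by (simp add: algebra_simps)
  have "s * Z \<le> (1 - s) * Z" using assms(5) ncx ndx by (simp add: dist_norm norm_minus_commute)
  then have s2: "s \<le> 1/2" using Z2 by (simp add: algebra_simps)
  have M2: "M \<ge> 2" using W2 by (simp add: M_def)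
  define k where "k = ((a - b) \<bullet> (c - d)) / (W * Z)"
  have WZ: "W * Z > 0" using W2 Z2 by simp
  have "\<bar>(a - b) \<bullet> (c - d)\<bar> \<le> W * Z"
    using Cauchy_Schwarz_ineq2[of "a - b" "c - d"] by (simp add: W_def Z_def dist_norm)
  then have kb: "\<bar>k\<bar> \<le> 1" unfolding k_def using WZ
    by (simp add: abs_divide divide_le_eq_1)
  have ip: "(a - b) \<bullet> (c - d) = k * W * Z" unfolding k_def using W2 Z2 by simp
  have i1: "(a - x) \<bullet> (c - x) = (t * s) * ((a - b) \<bullet> (c - d))" unfolding ax cx by simp
  have "(a - x) \<bullet> (c - x) / (norm (a - x) * norm (c - x)) = ((t * s) * (k * W * Z)) / ((t * s) * (W * Z))"
    unfolding i1 nax ncx ip by (simp add: ac_simps)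
  also have "\<dots> = k" using t(1) s(1) W2 Z2 by simp
  finally have "angle3 a x c = arccos k"
    unfolding angle3_def vangle_def by simp
  with assms(6) have "arccos k \<le> pi/180" by simp
  then have "cos (pi/180) \<le> cos (arccos k)"
    using kb arccos_bounded[of k] by (intro cos_monotone_0_pi_le) auto
  with cosb kb have k9: "k \<ge> 9/10" by (simp add: cos_arccos_abs)
  have k1: "k \<le> 1" using kb by simp
  have ipac: "(a - x) \<bullet> (c - x) = k * (t*W) * (s*Z)" unfolding i1 ip by (simp add: ac_simps)
  have "dist a c ^ 2 = norm ((a - x) - (c - x)) ^ 2" by (simp add: dist_norm)
  also have "\<dots> = (t*W)^2 + (s*Z)^2 - 2 * k * (t*W) * (s*Z)"
    unfolding nd nax ncx ipac by simp
  also have "\<dots> \<le> (M - 1/2)^2"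
  proof (intro r3)
    have "t * W \<le> (1/2) * W" using t2 W2 by (intro mult_right_mono) auto
    then show "t * W \<le> M / 2" by (simp add: M_def max_def)
    have "s * Z \<le> (1/2) * Z" using s2 Z2 by (intro mult_right_mono) auto
    then show "s * Z \<le> M / 2" by (simp add: M_def max_def)
  qed (use t(1) s(1) k9 M2 W2 Z2 in auto)
  finally have dac2: "dist a c ^ 2 \<le> (M - 1/2) ^ 2" .
  have dac: "dist a c \<le> M - 1/2" using power2_le_imp_le[OF dac2] M2 by simp
  have ipbd: "(b - x) \<bullet> (d - x) = k * ((1-t)*W) * ((1-s)*Z)"
  proof -
    have "(b - x) \<bullet> (d - x) = (1-t)*(1-s) * ((b - a) \<bullet> (d - c))" by (simp add: bx dx)
    also have "(b - a) \<bullet> (d - c) = (a - b) \<bullet> (c - d)"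
      by (metis inner_minus_left inner_minus_right minus_diff_eq)
    finally show ?thesis by (simp add: ip)
  qed
  have "dist b d ^ 2 = norm ((b - x) - (d - x)) ^ 2" by (simp add: dist_norm)
  also have "norm ((b - x) - (d - x)) ^ 2 = ((1-t)*W)^2 + ((1-s)*Z)^2 - 2 * k * ((1-t)*W) * ((1-s)*Z)"
    unfolding nd nbx ndx ipbd by simp
  also have "\<dots> \<le> (M - 1/2)^2"
  proof (intro r2)
    have "(1-t)*W \<ge> (1/2) * 2" using t2 W2 by (intro mult_mono) auto
    then show "(1-t)*W \<ge> 1" by simp
    have "(1-s)*Z \<ge> (1/2) * 2" using s2 Z2 by (intro mult_mono) auto
    then show "(1-s)*Z \<ge> 1" by simp
    have "(1-t)*W \<le> 1 * W" using t(1,2) W2 by (intro mult_right_mono) auto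
    then show "(1-t)*W \<le> M" by (simp add: M_def)
    have "(1-s)*Z \<le> 1 * Z" using s(1,2) Z2 by (intro mult_right_mono) auto
    then show "(1-s)*Z \<le> M" by (simp add: M_def)
  qed (use k9 k1 in auto)
  finally have dbd2: "dist b d ^ 2 \<le> (M - 1/2) ^ 2" .
  have dbd: "dist b d \<le> M - 1/2" using power2_le_imp_le[OF dbd2] M2 by simp
  from dac dbd show ?thesis unfolding M_def W_def Z_def by linarith
qed

end
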